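(* Let $\mathfrak{A}$ be a $(\circ,\wedge,\mathsf{A})$-algebra and $\theta$ a representation of $\mathfrak{A}$ by partial functions. Then $\theta$ is atomic if and only if $\theta$ is complete.
   Context: A $(\circ,\wedge,\mathsf{A})$-algebra is a set with two binary operations $\circ,\wedge$ and one unary operation $\mathsf{A}$. An algebra of partial functions of this signature is a set of partial functions, with base $X$ the union of all their domains and ranges, closed under: composition $f\circ g=\{(x,z)\mid \exists y\,(x,y)\in f,(y,z)\in g\}$; intersection; antidomain $\mathsf{A}(f)=\{(x,x)\mid x\in X, x\notin\mathrm{dom}(f)\}$. A representation by partial functions is an isomorphism onto such an algebra. The order on $\mathfrak{A}$ is $a\le b\iff a\wedge b=a$; a representable algebra has least element $0=\mathsf{A}(a)\circ a$. An atom is a minimal nonzero element. A representation $\theta$ is atomic if whenever $(x,y)\in\theta(a)$ for some $a\in\mathfrak{A}$, then $(x,y)\in\theta(b)$ for some atom $b$. A representation is complete if it is meet complete (for every nonempty $S$ with $\bigwedge S$ existing, $\theta(\bigwedge S)=\bigcap\theta[S]$), equivalently join complete (for every $S$ with $\bigvee S$ existing, $\theta(\bigvee S)=\bigcup\theta[S]$); these are equivalent for this signature. *)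

theory Defs
  imports Main
begin

definition base :: "('a \<Rightarrow> ('x \<times> 'x) set) \<Rightarrow> 'x set" where
  "base \<theta> = (\<Union>a. Domain (\<theta> a) \<union> Range (\<theta> a))"

text \<open>A representation by partial functions of the algebra (UNIV, compo, mt, ad)
  with composition, intersection (meet) and antidomain.\<close>
definition is_pfun_rep ::
  "('a \<Rightarrow> 'a \<Rightarrow> 'a) \<Rightarrow> ('a \<Rightarrow> 'a \<Rightarrow> 'a) \<Rightarrow> ('a \<Rightarrow> 'a) \<Rightarrow> ('a \<Rightarrow> ('x \<times> 'x) set) \<Rightarrow> bool" where
  "is_pfun_rep compo mt ad \<theta> \<longleftrightarrow>
     inj \<theta> \<and>
     (\<forall>a. single_valued (\<theta> a)) \<and>
     (\<forall>a b. \<theta> (compo a b) = \<theta> a O \<theta> b) \<and>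
     (\<forall>a b. \<theta> (mt a b) = \<theta> a \<inter> \<theta> b) \<and>
     (\<forall>a. \<theta> (ad a) = {(x, x) | x. x \<in> base \<theta> \<and> x \<notin> Domain (\<theta> a)})"

definition leq :: "('a \<Rightarrow> 'a \<Rightarrow> 'a) \<Rightarrow> 'a \<Rightarrow> 'a \<Rightarrow> bool" where
  "leq mt a b \<longleftrightarrow> mt a b = a"

definition is_bot :: "('a \<Rightarrow> 'a \<Rightarrow> 'a) \<Rightarrow> 'a \<Rightarrow> bool" where
  "is_bot mt z \<longleftrightarrow> (\<forall>c. leq mt z c)"

definition is_atom :: "('a \<Rightarrow> 'a \<Rightarrow> 'a) \<Rightarrow> 'a \<Rightarrow> bool" where
  "is_atom mt b \<longleftrightarrow> \<not> is_bot mt b \<and> (\<forall>c. leq mt c b \<longrightarrow> c = b \<or> is_bot mt c)"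

definition atomic_rep :: "('a \<Rightarrow> 'a \<Rightarrow> 'a) \<Rightarrow> ('a \<Rightarrow> ('x \<times> 'x) set) \<Rightarrow> bool" where
  "atomic_rep mt \<theta> \<longleftrightarrow>
     (\<forall>a x y. (x, y) \<in> \<theta> a \<longrightarrow> (\<exists>b. is_atom mt b \<and> (x, y) \<in> \<theta> b))"

definition is_glb :: "('a \<Rightarrow> 'a \<Rightarrow> 'a) \<Rightarrow> 'a set \<Rightarrow> 'a \<Rightarrow> bool" where
  "is_glb mt S m \<longleftrightarrow> (\<forall>s\<in>S. leq mt m s) \<and> (\<forall>c. (\<forall>s\<in>S. leq mt c s) \<longrightarrow> leq mt c m)"

definition complete_rep :: "('a \<Rightarrow> 'a \<Rightarrow> 'a) \<Rightarrow> ('a \<Rightarrow> ('x \<times> 'x) set) \<Rightarrow> bool" where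
  "complete_rep mt \<theta> \<longleftrightarrow>
     (\<forall>S m. S \<noteq> {} \<longrightarrow> is_glb mt S m \<longrightarrow> \<theta> m = \<Inter> (\<theta> ` S))"

end

theory Submission
  imports Defs
begin

lemma leq_iff:
  assumes "is_pfun_rep compo mt ad \<theta>"
  shows "leq mt a b \<longleftrightarrow> \<theta> a \<subseteq> \<theta> b"
proof -
  have inj: "inj \<theta>" and mt: "\<And>a b. \<theta> (mt a b) = \<theta> a \<inter> \<theta> b"
    using assms unfolding is_pfun_rep_def by auto
  have "mt a b = a \<longleftrightarrow> \<theta> (mt a b) = \<theta> a" using inj by (auto dest: injD)
  thus ?thesis unfolding leq_def mt by auto
qed

lemma restr:
  assumes "is_pfun_rep compo mt ad \<theta>"
  shows "\<theta> (compo (ad c) d) = {(u,v). (u,v) \<in> \<theta> d \<and> u \<notin> Domain (\<theta> c)}"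
proof -
  have co: "\<theta> (compo (ad c) d) = \<theta> (ad c) O \<theta> d"
    and adc: "\<theta> (ad c) = {(x, x) | x. x \<in> base \<theta> \<and> x \<notin> Domain (\<theta> c)}"
    using assms unfolding is_pfun_rep_def by auto
  have "Domain (\<theta> d) \<subseteq> base \<theta>" unfolding base_def by auto
  thus ?thesis unfolding co adc by auto
qed

lemma bot_iff:
  assumes "is_pfun_rep compo mt ad \<theta>"
  shows "is_bot mt c \<longleftrightarrow> \<theta> c = {}"
proof -
  define z where "z = compo (ad c) c"
  have z: "\<theta> z = {}" using restr[OF assms, of c c] unfolding z_def by auto
  show ?thesis
  proof
    assume "is_bot mt c"
    then have "leq mt c z" unfolding is_bot_def by auto
    then show "\<theta> c = {}" using leq_iff[OF assms] z by auto
  next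
    assume "\<theta> c = {}"
    then show "is_bot mt c" unfolding is_bot_def using leq_iff[OF assms] by auto
  qed
qed

theorem mainTheorem4:
  fixes compo mt :: "'a \<Rightarrow> 'a \<Rightarrow> 'a" and ad :: "'a \<Rightarrow> 'a"
    and \<theta> :: "'a \<Rightarrow> ('x \<times> 'x) set"
  assumes "is_pfun_rep compo mt ad \<theta>"
  shows "atomic_rep mt \<theta> \<longleftrightarrow> complete_rep mt \<theta>"
proof
  note L = leq_iff[OF assms] and R = restr[OF assms] and B = bot_iff[OF assms]
  have sv: "\<And>a. single_valued (\<theta> a)" using assms unfolding is_pfun_rep_def by auto
  have mt: "\<And>a b. \<theta> (mt a b) = \<theta> a \<inter> \<theta> b"
    using assms unfolding is_pfun_rep_def by auto
  {
    assume at: "atomic_rep mt \<theta>"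
    show "complete_rep mt \<theta>" unfolding complete_rep_def
    proof (intro allI impI)
      fix S m assume ne: "S \<noteq> {}" and g: "is_glb mt S m"
      show "\<theta> m = \<Inter> (\<theta> ` S)"
      proof
        show "\<theta> m \<subseteq> \<Inter> (\<theta> ` S)" using g L unfolding is_glb_def by auto
      next
        show "\<Inter> (\<theta> ` S) \<subseteq> \<theta> m"
        proof
          fix p assume p: "p \<in> \<Inter> (\<theta> ` S)"
          obtain x y where pxy: "p = (x,y)" by fastforce
          obtain s where "s \<in> S" using ne by auto
          then have "(x,y) \<in> \<theta> s" using p pxy by auto
          then obtain b where b: "is_atom mt b" "(x,y) \<in> \<theta> b"
            using at unfolding atomic_rep_def by blast
          have "\<forall>s\<in>S. leq mt b s"
          proof
            fix s assume "s \<in> S"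
            then have "(x,y) \<in> \<theta> (mt b s)" using p pxy b mt by auto
            then have nb: "\<not> is_bot mt (mt b s)" using B by auto
            have "leq mt (mt b s) b" using L mt by auto
            then have "mt b s = b" using b(1) nb unfolding is_atom_def by auto
            then show "leq mt b s" unfolding leq_def .
          qed
          then have "leq mt b m" using g unfolding is_glb_def by auto
          then show "p \<in> \<theta> m" using L b pxy by auto
        qed
      qed
    qed
  }
  {
    assume co: "complete_rep mt \<theta>"
    show "atomic_rep mt \<theta>" unfolding atomic_rep_def
    proof (intro allI impI)
      fix a x y assume xa: "(x,y) \<in> \<theta> a"
      show "\<exists>b. is_atom mt b \<and> (x, y) \<in> \<theta> b"
      proof (rule ccontr)
        assume noat: "\<not> (\<exists>b. is_atom mt b \<and> (x, y) \<in> \<theta> b)"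
        define S where "S = {c. leq mt c a \<and> (x,y) \<in> \<theta> c}"
        define z where "z = compo (ad a) a"
        have z: "\<theta> z = {}" using R[of a a] unfolding z_def by auto
        have aS: "a \<in> S" using xa L unfolding S_def by auto
        have "is_glb mt S z"
          unfolding is_glb_def
        proof (intro conjI ballI allI impI)
          fix s show "leq mt z s" using L z by auto
        next
          fix l assume lb: "\<forall>s\<in>S. leq mt l s"
          have la: "\<theta> l \<subseteq> \<theta> a" using lb aS L by auto
          show "leq mt l z"
          proof (cases "(x,y) \<in> \<theta> l")
            case True
            have "is_atom mt l" unfolding is_atom_def
            proof (intro conjI allI impI)
              show "\<not> is_bot mt l" using B True by auto
            next
              fix c assume cl: "leq mt c l"
              then have cl': "\<theta> c \<subseteq> \<theta> l" using L by auto
              show "c = l \<or> is_bot mt c"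
              proof (cases "(x,y) \<in> \<theta> c")
                case True
                then have "c \<in> S" using cl' la L unfolding S_def by auto
                then have "leq mt l c" using lb by auto
                then have "\<theta> l = \<theta> c" using L cl' by auto
                then have "c = l" using assms unfolding is_pfun_rep_def by (auto dest: injD)
                then show ?thesis by auto
              next
                case False
                have "x \<notin> Domain (\<theta> c)"
                proof
                  assume "x \<in> Domain (\<theta> c)"
                  then obtain y' where "(x,y') \<in> \<theta> c" by auto
                  then have "(x,y') \<in> \<theta> l" using cl' by auto
                  then have "y' = y" using True sv[of l] unfolding single_valued_def by auto
                  then show False using False \<open>(x,y') \<in> \<theta> c\<close> by auto
                qed
                then have "compo (ad c) l \<in> S" using R[of c l] True la L unfolding S_def by auto
                then have "\<theta> l \<subseteq> \<theta> (compo (ad c) l)" using lb L by auto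
                then have "\<theta> c = {}" using cl' R[of c l] by auto
                then show ?thesis using B by auto
              qed
            qed
            then show ?thesis using True noat by auto
          next
            case False
            have "x \<notin> Domain (\<theta> l)"
            proof
              assume "x \<in> Domain (\<theta> l)"
              then obtain y' where "(x,y') \<in> \<theta> l" by auto
              then have "(x,y') \<in> \<theta> a" using la by auto
              then have "y' = y" using xa sv[of a] unfolding single_valued_def by auto
              then show False using False \<open>(x,y') \<in> \<theta> l\<close> by auto
            qed
            then have "compo (ad l) a \<in> S" using R[of l a] xa L unfolding S_def by auto
            then have "\<theta> l \<subseteq> \<theta> (compo (ad l) a)" using lb L by auto
            then have "\<theta> l = {}" using R[of l a] by auto
            then show ?thesis using L by auto
          qed
        qed
        then have "\<theta> z = \<Inter> (\<theta> ` S)" using co aS unfolding complete_rep_def by blast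
        then show False using z aS S_def by auto
      qed
    qed
  }
qed

end
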